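(* Let $\beta$ and $\lambda$ be infinite cardinals. Then the full product $\mathbb{Z}^\beta$ is not isomorphic to any subgroup of $P(\lambda,\beta)$.
   Context: $\mathbb{Z}^\kappa$ is the group of functions $x:\kappa\to\mathbb{Z}$ under pointwise addition, $\mathrm{supp}(x)=\{\xi\in\kappa:x(\xi)\neq0\}$, and for an infinite cardinal $\beta\leq\lambda^+$, $P(\lambda,\beta)=\{x\in\mathbb{Z}^\lambda:|\mathrm{supp}(x)|<\beta\}$. *)

theory Defs
  imports Main
begin

text \<open>Cardinals are represented as cardinalities of (universes of) types.
  Z^kappa is the type 'k => int with pointwise addition.\<close>

definition supp :: "('a \<Rightarrow> int) \<Rightarrow> 'a set" where
  "supp x = {\<xi>. x \<xi> \<noteq> 0}"

text \<open>P(lambda, beta) with lambda = |UNIV :: 'l set| and beta = |UNIV :: 'b set|.\<close>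
definition Pset :: "'b itself \<Rightarrow> ('l \<Rightarrow> int) set" where
  "Pset _ = {x. (card_of (supp x), card_of (UNIV :: 'b set)) \<in> ordLess}"

end

theory Submission
  imports Defs "HOL-Library.Countable_Set"
begin

context
  includes cardinal_syntax
begin

definition unitv :: "'a \<Rightarrow> 'a \<Rightarrow> int" where
  "unitv j = (\<lambda>\<xi>. if \<xi> = j then 1 else 0)"

definition smul :: "int \<Rightarrow> ('a \<Rightarrow> int) \<Rightarrow> 'a \<Rightarrow> int" where
  "smul c x = (\<lambda>\<xi>. c * x \<xi>)"

definition addh :: "(('a \<Rightarrow> int) \<Rightarrow> int) \<Rightarrow> bool" where
  "addh \<phi> \<longleftrightarrow> (\<forall>x y. \<phi> (\<lambda>\<xi>. x \<xi> + y \<xi>) = \<phi> x + \<phi> y)"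

lemma addhD: "addh \<phi> \<Longrightarrow> \<phi> (\<lambda>\<xi>. x \<xi> + y \<xi>) = \<phi> x + \<phi> y"
  by (simp add: addh_def)

lemma addh_zero: assumes "addh \<phi>" shows "\<phi> (\<lambda>_. 0) = 0"
  using addhD[OF assms, of "\<lambda>_. 0" "\<lambda>_. 0"] by simp

lemma addh_uminus: assumes "addh \<phi>" shows "\<phi> (\<lambda>\<xi>. - x \<xi>) = - \<phi> x"
  using addhD[OF assms, of x "\<lambda>\<xi>. - x \<xi>"] addh_zero[OF assms] by simp

lemma addh_diff: assumes "addh \<phi>" shows "\<phi> (\<lambda>\<xi>. x \<xi> - y \<xi>) = \<phi> x - \<phi> y"
  using addhD[OF assms, of x "\<lambda>\<xi>. - y \<xi>"] addh_uminus[OF assms, of y] by simp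

lemma addh_smul_nat: assumes "addh \<phi>" shows "\<phi> (smul (int n) x) = int n * \<phi> x"
proof (induction n)
  case 0
  have "smul (int 0) x = (\<lambda>_. 0)" by (simp add: smul_def fun_eq_iff)
  then show ?case using addh_zero[OF assms] by simp
next
  case (Suc n)
  have "smul (int (Suc n)) x = (\<lambda>\<xi>. smul (int n) x \<xi> + x \<xi>)" by (simp add: smul_def fun_eq_iff algebra_simps)
  then show ?case using Suc addhD[OF assms] by (simp add: algebra_simps)
qed

lemma addh_smul: assumes "addh \<phi>" shows "\<phi> (smul c x) = c * \<phi> x"
proof (cases "c \<ge> 0")
  case True
  then obtain n where "c = int n" by (metis nonneg_int_cases)
  then show ?thesis using addh_smul_nat[OF assms] by simp
next
  case False
  then obtain n where n: "c = - int n" by (metis nonpos_int_cases linorder_linear)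
  have "smul c x = (\<lambda>\<xi>. - smul (int n) x \<xi>)" by (simp add: n smul_def fun_eq_iff)
  then show ?thesis using addh_smul_nat[OF assms] addh_uminus[OF assms] n by simp
qed

lemma addh_sum: fixes n :: nat assumes "addh \<phi>" shows "\<phi> (\<lambda>\<xi>. \<Sum>m<n. g m \<xi>) = (\<Sum>m<n. \<phi> (g m))"
proof (induction n)
  case 0
  then show ?case using addh_zero[OF assms] by simp
next
  case (Suc n)
  have "(\<lambda>\<xi>. \<Sum>m<Suc n. g m \<xi>) = (\<lambda>\<xi>. (\<lambda>\<xi>. \<Sum>m<n. g m \<xi>) \<xi> + g n \<xi>)" by (simp add: fun_eq_iff)
  then show ?case using Suc addhD[OF assms] by simp
qed


section \<open>Series with disjoint supports\<close>

definition djs :: "(nat \<Rightarrow> 'a \<Rightarrow> int) \<Rightarrow> bool" where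
  "djs y \<longleftrightarrow> (\<forall>m n \<xi>. m \<noteq> n \<longrightarrow> y m \<xi> \<noteq> 0 \<longrightarrow> y n \<xi> = 0)"

definition ser :: "(nat \<Rightarrow> 'a \<Rightarrow> int) \<Rightarrow> (nat \<Rightarrow> int) \<Rightarrow> 'a \<Rightarrow> int" where
  "ser y M \<xi> = (if \<exists>n. y n \<xi> \<noteq> 0 then M (LEAST n. y n \<xi> \<noteq> 0) * y (LEAST n. y n \<xi> \<noteq> 0) \<xi> else 0)"

definition sertl :: "(nat \<Rightarrow> 'a \<Rightarrow> int) \<Rightarrow> (nat \<Rightarrow> int) \<Rightarrow> nat \<Rightarrow> 'a \<Rightarrow> int" where
  "sertl y M n \<xi> = (if \<exists>k. n \<le> k \<and> y k \<xi> \<noteq> 0 then (M (LEAST k. y k \<xi> \<noteq> 0) div M n) * y (LEAST k. y k \<xi> \<noteq> 0) \<xi> else 0)"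

lemma djs_Least: assumes "djs y" "y k \<xi> \<noteq> 0" shows "(LEAST n. y n \<xi> \<noteq> 0) = k"
  by (metis (mono_tags, lifting) LeastI assms(1,2) djs_def)

lemma ser_decomp:
  assumes "djs y" and dv: "\<And>m k. m \<le> k \<Longrightarrow> M m dvd M k"
  shows "ser y M = (\<lambda>\<xi>. (\<Sum>m<n. M m * y m \<xi>) + smul (M n) (sertl y M n) \<xi>)"
proof
  fix \<xi>
  show "ser y M \<xi> = (\<Sum>m<n. M m * y m \<xi>) + smul (M n) (sertl y M n) \<xi>"
  proof (cases "\<exists>k. y k \<xi> \<noteq> 0")
    case True
    then obtain k where k: "y k \<xi> \<noteq> 0" by blast
    have L: "(LEAST n. y n \<xi> \<noteq> 0) = k" using djs_Least[OF assms(1) k] .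
    have oth: "\<And>m. m \<noteq> k \<Longrightarrow> y m \<xi> = 0" using assms(1) k unfolding djs_def by blast
    have S: "(\<Sum>m<n. M m * y m \<xi>) = (if k < n then M k * y k \<xi> else 0)"
    proof -
      have "(\<Sum>m<n. M m * y m \<xi>) = (\<Sum>m\<in>{..<n}. if m = k then M k * y k \<xi> else 0)"
        by (rule sum.cong) (auto simp: oth)
      also have "\<dots> = (if k < n then M k * y k \<xi> else 0)" by (simp add: sum.delta)
      finally show ?thesis .
    qed
    have T: "sertl y M n \<xi> = (if n \<le> k then (M k div M n) * y k \<xi> else 0)"
      unfolding sertl_def L using k oth by auto
    show ?thesis
    proof (cases "k < n")
      case True
      then show ?thesis using S T k L by (simp add: ser_def smul_def)
    next
      case False
      then have "M n dvd M k" using dv by simp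
      then have "M n * (M k div M n) = M k" by simp
      then show ?thesis using S T k L False by (simp add: ser_def smul_def mult.assoc[symmetric])
    qed
  next
    case False
    then show ?thesis by (simp add: ser_def sertl_def smul_def)
  qed
qed

lemma addh_ser:
  assumes "addh \<phi>" "djs y" "\<And>m k. m \<le> k \<Longrightarrow> M m dvd M k"
  shows "\<phi> (ser y M) = (\<Sum>m<n. M m * \<phi> (y m)) + M n * \<phi> (sertl y M n)"
proof -
  have "\<phi> (ser y M) = \<phi> (\<lambda>\<xi>. \<Sum>m<n. M m * y m \<xi>) + \<phi> (smul (M n) (sertl y M n))"
    using ser_decomp[OF assms(2,3), where n=n] addhD[OF assms(1), of "\<lambda>\<xi>. \<Sum>m<n. M m * y m \<xi>" "smul (M n) (sertl y M n)"] by simp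
  also have "\<phi> (\<lambda>\<xi>. \<Sum>m<n. M m * y m \<xi>) = (\<Sum>m<n. \<phi> (smul (M m) (y m)))"
    using addh_sum[OF assms(1), where n=n and g="\<lambda>m. smul (M m) (y m)"] by (simp add: smul_def)
  also have "\<dots> = (\<Sum>m<n. M m * \<phi> (y m))" using addh_smul[OF assms(1)] by simp
  finally show ?thesis using addh_smul[OF assms(1)] by simp
qed


fun MT :: "(nat \<Rightarrow> int) \<Rightarrow> nat \<Rightarrow> int \<times> int" where
  "MT a 0 = (1, 0)"
| "MT a (Suc n) = (fst (MT a n) * (2 * (snd (MT a n) + fst (MT a n) * \<bar>a n\<bar>) + int n + 2),
                   snd (MT a n) + fst (MT a n) * \<bar>a n\<bar>)"

lemma MT_pos: "fst (MT a n) \<ge> 1 \<and> snd (MT a n) \<ge> 0"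
proof (induction n)
  case 0 then show ?case by simp
next
  case (Suc n)
  let ?M = "fst (MT a n)" and ?T = "snd (MT a n)"
  have t: "?T + ?M * \<bar>a n\<bar> \<ge> 0" using Suc by simp
  have "?M * (2 * (?T + ?M * \<bar>a n\<bar>) + int n + 2) \<ge> 1 * 1"
    by (rule mult_mono) (use Suc t in auto)
  then show ?case using t by simp
qed

lemma MT_T: "snd (MT a n) = (\<Sum>i<n. fst (MT a i) * \<bar>a i\<bar>)"
  by (induction n) auto

lemma MT_dvd_Suc: "fst (MT a n) dvd fst (MT a (Suc n))"
  by simp

lemma MT_dvd: "m \<le> k \<Longrightarrow> fst (MT a m) dvd fst (MT a k)"
proof (induction k)
  case 0 then show ?case by simp
next
  case (Suc k)
  then show ?case
    by (metis MT_dvd_Suc dvd_trans le_Suc_eq dvd_refl)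
qed

lemma MT_big: "fst (MT a n) \<ge> snd (MT a n) + int n"
proof (cases n)
  case 0 then show ?thesis by simp
next
  case (Suc k)
  define M where "M = fst (MT a k)"
  define T' where "T' = snd (MT a k) + fst (MT a k) * \<bar>a k\<bar>"
  define X where "X = 2 * T' + int k + 2"
  have t: "T' \<ge> 0" using MT_pos[of a k] by (simp add: T'_def)
  have M1: "M \<ge> 1" using MT_pos[of a k] by (simp add: M_def)
  have X0: "X \<ge> 0" using t by (simp add: X_def)
  have C: "M * X \<ge> X" using mult_right_mono[OF M1 X0] by simp
  have A: "fst (MT a n) = M * X" "snd (MT a n) = T'" using Suc by (simp_all add: M_def T'_def X_def)
  have "int n = int k + 1" using Suc by simp
  then show ?thesis unfolding A using C t X_def by linarith
qed

lemma specker: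
  assumes ph: "addh \<phi>" and dj: "djs y"
  shows "finite {n. \<phi> (y n) \<noteq> 0}"
proof (rule ccontr)
  assume inf: "infinite {n. \<phi> (y n) \<noteq> 0}"
  let ?K = "{n. \<phi> (y n) \<noteq> 0}"
  define z where "z n = y (enumerate ?K n)" for n
  define a where "a n = \<phi> (z n)" for n
  have a_nz: "a n \<noteq> 0" for n
    using enumerate_in_set[OF inf, of n] by (simp add: a_def z_def)
  have djz: "djs z"
    unfolding djs_def z_def
  proof (intro allI impI)
    fix m n \<xi> assume "m \<noteq> n" "y (enumerate ?K m) \<xi> \<noteq> 0"
    moreover have "enumerate ?K m \<noteq> enumerate ?K n"
      using \<open>m \<noteq> n\<close> inf by (metis enumerate_mono linorder_neqE_nat order_less_irrefl)
    ultimately show "y (enumerate ?K n) \<xi> = 0" using dj unfolding djs_def by blast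
  qed
  define M where "M n = fst (MT a n)" for n
  define T where "T n = snd (MT a n)" for n
  define s where "s n = (\<Sum>m<n. M m * a m)" for n
  define N where "N = \<phi> (ser z M)"
  have dvM: "\<And>m k. m \<le> k \<Longrightarrow> M m dvd M k" unfolding M_def by (rule MT_dvd)
  have dec: "N = s n + M n * \<phi> (sertl z M n)" for n
  proof -
    have "\<phi> (ser z M) = (\<Sum>m<n. M m * \<phi> (z m)) + M n * \<phi> (sertl z M n)"
      by (rule addh_ser[OF ph djz]) (rule dvM)
    then show ?thesis unfolding N_def s_def a_def by simp
  qed
  have Mpos: "M n \<ge> 1" for n using MT_pos[of a n] by (simp add: M_def)
  have sT: "\<bar>s n\<bar> \<le> T n" for n
  proof -
    have "\<bar>s n\<bar> \<le> (\<Sum>m<n. \<bar>M m * a m\<bar>)" unfolding s_def by (rule sum_abs)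
    also have "\<dots> = (\<Sum>m<n. M m * \<bar>a m\<bar>)"
    proof (intro sum.cong refl)
      fix m assume "m \<in> {..<n}"
      show "\<bar>M m * a m\<bar> = M m * \<bar>a m\<bar>" using Mpos[of m] by (simp add: abs_mult)
    qed
    also have "\<dots> = T n" by (simp add: T_def M_def MT_T)
    finally show ?thesis .
  qed
  have big: "M n \<ge> T n + int n" for n using MT_big[of a n] by (simp add: M_def T_def)
  have eq: "N = s n" if "int n > \<bar>N\<bar>" for n
  proof (rule ccontr)
    assume ne: "N \<noteq> s n"
    let ?w = "\<phi> (sertl z M n)"
    have "?w \<noteq> 0" using ne dec[of n] by auto
    then have w1: "\<bar>?w\<bar> \<ge> 1" by linarith
    have "M n * \<bar>?w\<bar> \<ge> M n * 1" by (rule mult_left_mono[OF w1]) (use Mpos[of n] in simp)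
    then have "\<bar>M n * ?w\<bar> \<ge> M n * 1" using Mpos[of n] by (simp add: abs_mult)
    moreover have "\<bar>M n * ?w\<bar> = \<bar>N - s n\<bar>" using dec[of n] by simp
    moreover have "\<bar>N - s n\<bar> \<le> \<bar>N\<bar> + \<bar>s n\<bar>" by simp
    ultimately show False using sT[of n] big[of n] that by linarith
  qed
  define n0 where "n0 = nat \<bar>N\<bar> + 1"
  have "N = s n0" "N = s (Suc n0)" using eq by (auto simp: n0_def)
  then have "M n0 * a n0 = 0" by (simp add: s_def)
  then show False using Mpos[of n0] a_nz[of n0] by simp
qed


lemma bez23: "\<exists>u v. (2::int)^n * u + 3^n * v = c"
proof -
  have "coprime ((2::int)^n) (3^n)" by simp
  then have "gcd ((2::int)^n) (3^n) = 1" by simp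
  then obtain u v where "u * (2::int)^n + v * 3^n = 1" using bezout_int[of "(2::int)^n" "3^n"] by auto
  then have "(2::int)^n * (u * c) + 3^n * (v * c) = c" by (metis mult.commute distrib_right mult.left_neutral mult.assoc)
  then show ?thesis by blast
qed

lemma dvd_all_pow_zero:
  fixes p :: int assumes "p \<ge> 2" "\<And>n. p^n dvd w" shows "w = 0"
proof (rule ccontr)
  assume w: "w \<noteq> 0"
  let ?n = "nat \<bar>w\<bar>"
  have "p^?n dvd w" using assms(2) .
  then have le: "\<bar>p^?n\<bar> \<le> \<bar>w\<bar>" using w by (simp add: dvd_imp_le_int)
  have "(2::int)^?n \<le> p^?n" using assms(1) by (simp add: power_mono)
  moreover have "int ?n < 2^?n" by (metis less_exp of_nat_less_iff of_nat_numeral of_nat_power)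
  ultimately show False using le w by simp
qed

lemma addh_unit_smul: assumes "addh \<psi>" "\<psi> (unitv j) = 0" shows "\<psi> (smul c (unitv j)) = 0"
  using addh_smul[OF assms(1)] assms(2) by simp

lemma pow_series_null:
  fixes p :: int
  assumes ph: "addh \<psi>" and e0: "\<And>j. \<psi> (unitv j) = 0" and p: "p \<ge> 2" and inj: "inj_on t A"
  shows "\<psi> (\<lambda>\<xi>. if \<xi> \<in> A then p ^ (t \<xi>) * g \<xi> else 0) = 0"
proof -
  define y where "y m \<xi> = (if \<xi> \<in> A \<and> t \<xi> = m then g \<xi> else 0)" for m \<xi>
  define M where "M m = p ^ m" for m
  have dj: "djs y" unfolding djs_def y_def by auto
  have dv: "\<And>m k. m \<le> k \<Longrightarrow> M m dvd M k" unfolding M_def by (simp add: le_imp_power_dvd)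
  have serW: "ser y M = (\<lambda>\<xi>. if \<xi> \<in> A then p ^ (t \<xi>) * g \<xi> else 0)"
  proof
    fix \<xi>
    show "ser y M \<xi> = (if \<xi> \<in> A then p ^ (t \<xi>) * g \<xi> else 0)"
    proof (cases "\<exists>n. y n \<xi> \<noteq> 0")
      case True
      then obtain n where n: "y n \<xi> \<noteq> 0" by blast
      then have "\<xi> \<in> A" "t \<xi> = n" by (auto simp: y_def split: if_splits)
      then show ?thesis using djs_Least[OF dj n] n by (simp add: ser_def M_def y_def)
    next
      case False
      then have "y (t \<xi>) \<xi> = 0" by blast
      then show ?thesis using False by (auto simp: ser_def y_def)
    qed
  qed
  have y0: "\<psi> (y m) = 0" for m
  proof (cases "\<exists>\<xi>0. \<xi>0 \<in> A \<and> t \<xi>0 = m")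
    case True
    then obtain \<xi>0 where x0: "\<xi>0 \<in> A" "t \<xi>0 = m" by blast
    have "y m = smul (g \<xi>0) (unitv \<xi>0)"
    proof
      fix \<xi> show "y m \<xi> = smul (g \<xi>0) (unitv \<xi>0) \<xi>"
        using x0 inj by (auto simp: y_def smul_def unitv_def inj_on_def)
    qed
    then show ?thesis using addh_unit_smul[OF ph e0] by simp
  next
    case False
    then have "y m = (\<lambda>_. 0)" by (auto simp: y_def fun_eq_iff)
    then show ?thesis using addh_zero[OF ph] by simp
  qed
  have "\<And>n. p^n dvd \<psi> (ser y M)"
  proof -
    fix n
    have "\<psi> (ser y M) = (\<Sum>m<n. M m * \<psi> (y m)) + M n * \<psi> (sertl y M n)"
      by (rule addh_ser[OF ph dj]) (rule dv)
    then show "p^n dvd \<psi> (ser y M)" by (simp add: y0 M_def)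
  qed
  then have "\<psi> (ser y M) = 0" using dvd_all_pow_zero[OF p] by blast
  then show ?thesis using serW by simp
qed

lemma countable_null:
  assumes ph: "addh \<psi>" and e0: "\<And>j. \<psi> (unitv j) = 0" and A: "countable A" and sc: "supp c \<subseteq> A"
  shows "\<psi> c = 0"
proof -
  define t where "t = to_nat_on A"
  have inj: "inj_on t A" using A unfolding t_def by (rule inj_on_to_nat_on)
  have "\<forall>\<xi>. \<exists>uv. (2::int)^(t \<xi>) * fst uv + 3^(t \<xi>) * snd uv = c \<xi>"
    using bez23 by fastforce
  then obtain uv where uv: "\<And>\<xi>. (2::int)^(t \<xi>) * fst (uv \<xi>) + 3^(t \<xi>) * snd (uv \<xi>) = c \<xi>" by metis
  define U where "U = (\<lambda>\<xi>. if \<xi> \<in> A then (2::int) ^ (t \<xi>) * fst (uv \<xi>) else 0)"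
  define V where "V = (\<lambda>\<xi>. if \<xi> \<in> A then (3::int) ^ (t \<xi>) * snd (uv \<xi>) else 0)"
  have c: "c = (\<lambda>\<xi>. U \<xi> + V \<xi>)"
  proof
    fix \<xi> show "c \<xi> = U \<xi> + V \<xi>"
      using uv[of \<xi>] sc by (cases "\<xi> \<in> A") (auto simp: U_def V_def supp_def)
  qed
  have "\<psi> U = 0" unfolding U_def by (rule pow_series_null[OF ph e0 _ inj]) simp
  moreover have "\<psi> V = 0" unfolding V_def by (rule pow_series_null[OF ph e0 _ inj]) simp
  ultimately show ?thesis using c addhD[OF ph, of U V] by simp
qed


definition pos :: "(('a \<Rightarrow> int) \<Rightarrow> int) \<Rightarrow> 'a set \<Rightarrow> bool" where
  "pos \<psi> A \<longleftrightarrow> (\<exists>c. supp c \<subseteq> A \<and> \<psi> c \<noteq> 0)"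

definition DP :: "(('a \<Rightarrow> int) \<Rightarrow> int) \<Rightarrow> 'a set \<Rightarrow> nat \<Rightarrow> bool" where
  "DP \<psi> S n \<longleftrightarrow> (\<exists>F. finite F \<and> n \<le> card F \<and> (\<forall>A\<in>F. A \<subseteq> S \<and> pos \<psi> A) \<and> pairwise disjnt F)"

lemma pos_mono: "A \<subseteq> B \<Longrightarrow> pos \<psi> A \<Longrightarrow> pos \<psi> B"
  unfolding pos_def by blast

lemma pos_split:
  assumes ph: "addh \<psi>" and p: "pos \<psi> A"
  shows "pos \<psi> (A \<inter> T) \<or> pos \<psi> (A - T)"
proof -
  obtain c where c: "supp c \<subseteq> A" "\<psi> c \<noteq> 0" using p unfolding pos_def by blast
  define c1 where "c1 = (\<lambda>\<xi>. if \<xi> \<in> T then c \<xi> else 0)"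
  define c2 where "c2 = (\<lambda>\<xi>. if \<xi> \<in> T then 0 else c \<xi>)"
  have "c = (\<lambda>\<xi>. c1 \<xi> + c2 \<xi>)" by (auto simp: c1_def c2_def fun_eq_iff)
  then have "\<psi> c = \<psi> c1 + \<psi> c2" using addhD[OF ph, of c1 c2] by simp
  then have "\<psi> c1 \<noteq> 0 \<or> \<psi> c2 \<noteq> 0" using c by auto
  moreover have "supp c1 \<subseteq> A \<inter> T" "supp c2 \<subseteq> A - T" using c by (auto simp: supp_def c1_def c2_def)
  ultimately show ?thesis unfolding pos_def by blast
qed

lemma pos_nonempty: assumes ph: "addh \<psi>" and p: "pos \<psi> A" shows "A \<noteq> {}"
proof
  assume "A = {}"
  then obtain c where "supp c = {}" "\<psi> c \<noteq> 0" using p unfolding pos_def by blast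
  then have "c = (\<lambda>_. 0)" by (auto simp: supp_def fun_eq_iff)
  then show False using \<open>\<psi> c \<noteq> 0\<close> addh_zero[OF ph] by simp
qed

lemma DP_0: "DP \<psi> S 0"
  unfolding DP_def by (rule exI[of _ "{}"]) simp

lemma DP_mono_n: "m \<le> n \<Longrightarrow> DP \<psi> S n \<Longrightarrow> DP \<psi> S m"
  unfolding DP_def by (meson order_trans)

lemma DP_mono_S: "S \<subseteq> S' \<Longrightarrow> DP \<psi> S n \<Longrightarrow> DP \<psi> S' n"
  unfolding DP_def by blast

lemma DP_split:
  assumes ph: "addh \<psi>" and d: "DP \<psi> S (2*m)"
  shows "DP \<psi> (S \<inter> T) m \<or> DP \<psi> (S - T) m"
proof -
  obtain F where F: "finite F" "2*m \<le> card F" "\<forall>A\<in>F. A \<subseteq> S \<and> pos \<psi> A" "pairwise disjnt F"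
    using d unfolding DP_def by blast
  define F1 where "F1 = {A\<in>F. pos \<psi> (A \<inter> T)}"
  define F2 where "F2 = {A\<in>F. pos \<psi> (A - T)}"
  have FU: "F = F1 \<union> F2" using F(3) pos_split[OF ph] by (auto simp: F1_def F2_def)
  have "card F \<le> card F1 + card F2" unfolding FU by (rule card_Un_le)
  then have cc: "m \<le> card F1 \<or> m \<le> card F2" using F(2) by linarith
  have fin1: "finite F1" "finite F2" using F(1) by (auto simp: F1_def F2_def)
  have inj1: "inj_on (\<lambda>A. A \<inter> T) F1"
  proof (rule inj_onI)
    fix A B assume AB: "A \<in> F1" "B \<in> F1" "A \<inter> T = B \<inter> T"
    show "A = B"
    proof (rule ccontr)
      assume "A \<noteq> B"
      then have "disjnt A B" using F(4) AB(1,2) by (auto simp: F1_def pairwise_def)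
      moreover have "A \<inter> T \<noteq> {}" using pos_nonempty[OF ph] AB(1) by (auto simp: F1_def)
      ultimately show False using AB(3) by (auto simp: disjnt_def)
    qed
  qed
  have inj2: "inj_on (\<lambda>A. A - T) F2"
  proof (rule inj_onI)
    fix A B assume AB: "A \<in> F2" "B \<in> F2" "A - T = B - T"
    show "A = B"
    proof (rule ccontr)
      assume "A \<noteq> B"
      then have "disjnt A B" using F(4) AB(1,2) by (auto simp: F2_def pairwise_def)
      moreover have "A - T \<noteq> {}" using pos_nonempty[OF ph] AB(1) by (auto simp: F2_def)
      ultimately show False using AB(3) by (auto simp: disjnt_def)
    qed
  qed
  have g1: "DP \<psi> (S \<inter> T) (card F1)"
    unfolding DP_def
  proof (intro exI[of _ "(\<lambda>A. A \<inter> T) ` F1"] conjI)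
    show "finite ((\<lambda>A. A \<inter> T) ` F1)" using fin1 by simp
    show "card F1 \<le> card ((\<lambda>A. A \<inter> T) ` F1)" using card_image[OF inj1] by simp
    show "\<forall>A\<in>(\<lambda>A. A \<inter> T) ` F1. A \<subseteq> S \<inter> T \<and> pos \<psi> A" using F(3) by (auto simp: F1_def)
    show "pairwise disjnt ((\<lambda>A. A \<inter> T) ` F1)"
      using F(4) by (auto simp: F1_def pairwise_def disjnt_def)
  qed
  have g2: "DP \<psi> (S - T) (card F2)"
    unfolding DP_def
  proof (intro exI[of _ "(\<lambda>A. A - T) ` F2"] conjI)
    show "finite ((\<lambda>A. A - T) ` F2)" using fin1 by simp
    show "card F2 \<le> card ((\<lambda>A. A - T) ` F2)" using card_image[OF inj2] by simp
    show "\<forall>A\<in>(\<lambda>A. A - T) ` F2. A \<subseteq> S - T \<and> pos \<psi> A" using F(3) by (auto simp: F2_def)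
    show "pairwise disjnt ((\<lambda>A. A - T) ` F2)"
      using F(4) by (auto simp: F2_def pairwise_def disjnt_def)
  qed
  show ?thesis using cc g1 g2 DP_mono_n by blast
qed

lemma DP_extract:
  assumes ph: "addh \<psi>" and all: "\<And>n. DP \<psi> S n"
  shows "\<exists>P\<subseteq>S. pos \<psi> P \<and> (\<forall>n. DP \<psi> (S - P) n)"
proof -
  obtain F where F: "finite F" "2 \<le> card F" "\<forall>A\<in>F. A \<subseteq> S \<and> pos \<psi> A" "pairwise disjnt F"
    using all[of 2] unfolding DP_def by blast
  obtain B1 B2 where B: "B1 \<in> F" "B2 \<in> F" "B1 \<noteq> B2"
  proof -
    obtain B1 where "B1 \<in> F" using F(2) by fastforce
    moreover have "card (F - {B1}) \<ge> 1" using F(1,2) \<open>B1 \<in> F\<close> by simp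
    then have "F - {B1} \<noteq> {}" by (metis card.empty not_one_le_zero)
    then obtain B2 where "B2 \<in> F - {B1}" by blast
    ultimately show ?thesis using that by blast
  qed
  have dis: "B1 \<inter> B2 = {}" using F(4) B by (auto simp: pairwise_def disjnt_def)
  show ?thesis
  proof (cases "\<forall>n. DP \<psi> (S - B1) n")
    case True
    then show ?thesis using F(3) B(1) by blast
  next
    case False
    then obtain n0 where n0: "\<not> DP \<psi> (S - B1) n0" by blast
    have "DP \<psi> (S - B2) n" for n
    proof -
      have "DP \<psi> (S \<inter> B1) (n + n0) \<or> DP \<psi> (S - B1) (n + n0)"
        using DP_split[OF ph all[of "2*(n+n0)"]] .
      moreover have "\<not> DP \<psi> (S - B1) (n + n0)" using n0 DP_mono_n[of n0 "n+n0"] by auto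
      ultimately have "DP \<psi> (S \<inter> B1) n" using DP_mono_n[of n "n+n0"] by auto
      moreover have "S \<inter> B1 \<subseteq> S - B2" using dis by blast
      ultimately show ?thesis using DP_mono_S by blast
    qed
    then show ?thesis using F(3) B(2) by blast
  qed
qed

lemma finite_rank:
  assumes ph: "addh \<psi>"
  shows "\<exists>n. \<not> DP \<psi> UNIV n"
proof (rule ccontr)
  assume "\<not> (\<exists>n. \<not> DP \<psi> UNIV n)"
  then have all0: "\<And>n. DP \<psi> UNIV n" by blast
  define step where "step S = (SOME P. P \<subseteq> S \<and> pos \<psi> P \<and> (\<forall>n. DP \<psi> (S - P) n))" for S :: "'a set"
  define Sq where "Sq = rec_nat UNIV (\<lambda>_ S. S - step S)"
  have Sq0: "Sq 0 = UNIV" and SqS: "Sq (Suc k) = Sq k - step (Sq k)" for k by (simp_all add: Sq_def)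
  have stepP: "step S \<subseteq> S \<and> pos \<psi> (step S) \<and> (\<forall>n. DP \<psi> (S - step S) n)" if "\<And>n. DP \<psi> S n" for S
    unfolding step_def by (rule someI_ex) (rule DP_extract[OF ph that])
  have allk: "\<forall>n. DP \<psi> (Sq k) n" for k
  proof (induction k)
    case 0 then show ?case using all0 by (simp add: Sq0)
  next
    case (Suc k) then show ?case using stepP[of "Sq k"] by (simp add: SqS)
  qed
  define P where "P k = step (Sq k)" for k
  have Pk: "P k \<subseteq> Sq k" "pos \<psi> (P k)" for k using stepP[of "Sq k"] allk[of k] by (auto simp: P_def)
  have anti: "Sq (k + d) \<subseteq> Sq k" for k d by (induction d) (auto simp: SqS)
  have disj: "P k \<inter> P k' = {}" if "k < k'" for k k'
  proof -
    have "Sq k' \<subseteq> Sq (Suc k)" using anti[of "Suc k" "k' - Suc k"] that by simp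
    then have "P k' \<subseteq> Sq k - P k" using Pk(1)[of k'] by (auto simp: SqS P_def)
    then show ?thesis by blast
  qed
  define y where "y k = (SOME c. supp c \<subseteq> P k \<and> \<psi> c \<noteq> 0)" for k
  have yk: "supp (y k) \<subseteq> P k \<and> \<psi> (y k) \<noteq> 0" for k
  proof -
    have "\<exists>c. supp c \<subseteq> P k \<and> \<psi> c \<noteq> 0" using Pk(2)[of k] by (simp add: pos_def)
    then show ?thesis unfolding y_def by (rule someI_ex)
  qed
  have dj: "djs y"
    unfolding djs_def
  proof (intro allI impI)
    fix m n \<xi> assume mn: "m \<noteq> n" and ym: "y m \<xi> \<noteq> 0"
    show "y n \<xi> = 0"
    proof (rule ccontr)
      assume "y n \<xi> \<noteq> 0"
      then have "\<xi> \<in> P n" "\<xi> \<in> P m" using yk[of n] yk[of m] ym by (auto simp: supp_def)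
      then show False using disj[of m n] disj[of n m] mn by (cases "m < n") auto
    qed
  qed
  have "finite {n. \<psi> (y n) \<noteq> 0}" by (rule specker[OF ph dj])
  moreover have "{n. \<psi> (y n) \<noteq> 0} = UNIV" using yk by auto
  ultimately show False by simp
qed



lemma finite_ordLess_infinite: "finite A \<Longrightarrow> infinite B \<Longrightarrow> |A| <o |B|"
proof -
  assume a: "finite A" "infinite B"
  have "|A| <o natLeq" using finite_iff_ordLess_natLeq[THEN iffD1, OF a(1)] .
  moreover have "natLeq \<le>o |B|" using a(2) infinite_iff_natLeq_ordLeq by metis
  ultimately show ?thesis by (rule ordLess_ordLeq_trans)
qed


lemma small_union_finite:
  assumes "|W| <o |Q|" "infinite Q" "\<And>i. i \<in> W \<Longrightarrow> finite (F i)"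
  shows "|\<Union>i\<in>W. F i| <o |Q|"
proof (cases "finite W")
  case True
  then have "finite (\<Union>i\<in>W. F i)" using assms(3) by blast
  then show ?thesis using assms(2) by (rule finite_ordLess_infinite)
next
  case False
  have "|\<Union>i\<in>W. F i| \<le>o |W|"
  proof (rule card_of_UNION_ordLeq_infinite[OF False])
    show "|W| \<le>o |W|" by (simp add: ordLeq_refl card_of_Card_order)
    show "\<forall>i\<in>W. |F i| \<le>o |W|"
    proof
      fix i assume "i \<in> W"
      then have "|F i| <o |W|" using assms(3) False by (intro finite_ordLess_infinite) auto
      then show "|F i| \<le>o |W|" by (rule ordLess_imp_ordLeq)
    qed
  qed
  then show ?thesis using assms(1) by (rule ordLeq_ordLess_trans)
qed

lemma small_sub: "A \<subseteq> B \<Longrightarrow> |B| <o |Q| \<Longrightarrow> |A| <o |Q|"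
  by (rule ordLeq_ordLess_trans[OF card_of_mono1])

lemma not_small_sub: "A \<subseteq> B \<Longrightarrow> \<not> ( |A| <o |Q| ) \<Longrightarrow> \<not> ( |B| <o |Q| )"
  using small_sub by metis

definition Wof :: "('a \<times> int option) set \<Rightarrow> 'a set" where
  "Wof X = {i. (i, None) \<in> X}"
definition domf :: "('a \<times> int option) set \<Rightarrow> 'a set" where
  "domf X = {j. \<exists>v. (j, Some v) \<in> X}"
definition valf :: "('a \<times> int option) set \<Rightarrow> 'a \<Rightarrow> int" where
  "valf X j = (if \<exists>v. (j, Some v) \<in> X then (THE v. (j, Some v) \<in> X) else 0)"
definition fnl :: "('a \<times> int option) set \<Rightarrow> bool" where
  "fnl X \<longleftrightarrow> (\<forall>j v v'. (j, Some v) \<in> X \<longrightarrow> (j, Some v') \<in> X \<longrightarrow> v = v')"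

lemma valf_eq: "fnl X \<Longrightarrow> (j, Some v) \<in> X \<Longrightarrow> valf X j = v"
  unfolding valf_def fnl_def by (auto intro: the_equality)

lemma valf_out: "j \<notin> domf X \<Longrightarrow> valf X j = 0"
  unfolding valf_def domf_def by auto

lemma CL:
  fixes b :: "'a \<Rightarrow> 'a \<Rightarrow> int" and Q :: "'a set"
  assumes fin: "\<And>i. finite {j. b i j \<noteq> 0}" and diag: "\<And>i. i \<in> Q \<Longrightarrow> b i i \<noteq> 0" and Qinf: "infinite Q"
  shows "\<exists>c. supp c \<subseteq> Q \<and> \<not> ( |{i\<in>Q. (\<Sum>j\<in>{j. b i j \<noteq> 0}. b i j * c j) \<noteq> 0}| <o |Q| )"
proof -
  define D where "D i = {j. b i j \<noteq> 0}" for i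
  define L where "L i c = (\<Sum>j\<in>D i. b i j * c j)" for i and c :: "'a \<Rightarrow> int"
  define good where "good X \<longleftrightarrow> Wof X \<subseteq> Q \<and> fnl X \<and> domf X = (\<Union>i\<in>Wof X. D i \<inter> Q) \<and> (\<forall>i\<in>Wof X. L i (valf X) \<noteq> 0)" for X
  have Lcong: "L i c = L i c'" if "\<And>j. j \<in> D i \<Longrightarrow> c j = c' j" for i c c'
    unfolding L_def using that by (intro sum.cong) auto
  have iD: "i \<in> D i" if "i \<in> Q" for i using diag[OF that] by (simp add: D_def)
  have finD: "finite (D i)" for i using fin by (simp add: D_def)
  have gW: "Wof X \<subseteq> Q" and gF: "fnl X" and gD: "domf X = (\<Union>i\<in>Wof X. D i \<inter> Q)"
    and gL: "\<And>i. i \<in> Wof X \<Longrightarrow> L i (valf X) \<noteq> 0" if "good X" for X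
    using that unfolding good_def by auto
  have domQ: "domf X \<subseteq> Q" if "good X" for X using gD[OF that] by auto
  have WD: "Wof X \<subseteq> domf X" if "good X" for X
  proof
    fix i assume i: "i \<in> Wof X"
    then have "i \<in> D i \<inter> Q" using gW[OF that] iD by auto
    then show "i \<in> domf X" using gD[OF that] i by blast
  qed
  have "\<exists>M\<in>{X. good X}. \<forall>X\<in>{X. good X}. M \<subseteq> X \<longrightarrow> X = M"
  proof (rule Zorn_Lemma, intro ballI)
    fix C assume C: "C \<in> chains {X. good X}"
    let ?U = "\<Union>C"
    have Cg: "\<And>X. X \<in> C \<Longrightarrow> good X" using C unfolding chains_def by auto
    have Cch: "\<And>X Y. X \<in> C \<Longrightarrow> Y \<in> C \<Longrightarrow> X \<subseteq> Y \<or> Y \<subseteq> X" using C unfolding chains_def chain_subset_def by auto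
    have WU: "Wof ?U = (\<Union>X\<in>C. Wof X)" by (auto simp: Wof_def)
    have fU: "fnl ?U"
      unfolding fnl_def
    proof (intro allI impI)
      fix j v v' assume "(j, Some v) \<in> ?U" "(j, Some v') \<in> ?U"
      then obtain X Y where XY: "X \<in> C" "Y \<in> C" "(j, Some v) \<in> X" "(j, Some v') \<in> Y" by blast
      show "v = v'"
      proof (cases "X \<subseteq> Y")
        case True then show ?thesis using gF[OF Cg[OF XY(2)]] XY unfolding fnl_def by blast
      next
        case False then have "Y \<subseteq> X" using Cch[OF XY(1,2)] by blast
        then show ?thesis using gF[OF Cg[OF XY(1)]] XY unfolding fnl_def by blast
      qed
    qed
    have dU: "domf ?U = (\<Union>i\<in>Wof ?U. D i \<inter> Q)"
    proof -
      have "domf ?U = (\<Union>X\<in>C. domf X)" by (auto simp: domf_def)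
      also have "\<dots> = (\<Union>X\<in>C. \<Union>i\<in>Wof X. D i \<inter> Q)" using gD[OF Cg] by (intro SUP_cong) auto
      also have "\<dots> = (\<Union>i\<in>Wof ?U. D i \<inter> Q)" unfolding WU by blast
      finally show ?thesis .
    qed
    have LU: "\<forall>i\<in>Wof ?U. L i (valf ?U) \<noteq> 0"
    proof
      fix i assume "i \<in> Wof ?U"
      then obtain X where X: "X \<in> C" "i \<in> Wof X" unfolding WU by blast
      have gX: "good X" using Cg[OF X(1)] .
      have "L i (valf ?U) = L i (valf X)"
      proof (rule Lcong)
        fix j assume j: "j \<in> D i"
        show "valf ?U j = valf X j"
        proof (cases "j \<in> Q")
          case True
          then have "j \<in> domf X" using gD[OF gX] X(2) j by auto
          then obtain v where v: "(j, Some v) \<in> X" by (auto simp: domf_def)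
          then have "(j, Some v) \<in> ?U" using X(1) by blast
          then have "valf ?U j = v" by (rule valf_eq[OF fU])
          moreover have "valf X j = v" by (rule valf_eq[OF gF[OF gX] v])
          ultimately show ?thesis by simp
        next
          case False
          have "j \<notin> domf ?U" using False dU by auto
          moreover have "j \<notin> domf X" using False domQ[OF gX] by auto
          ultimately show ?thesis by (simp add: valf_out)
        qed
      qed
      then show "L i (valf ?U) \<noteq> 0" using gL[OF gX X(2)] by simp
    qed
    have "Wof ?U \<subseteq> Q" using gW[OF Cg] unfolding WU by auto
    then show "?U \<in> {X. good X}" using fU dU LU unfolding good_def by auto
  qed
  then obtain M where gM: "good M" and maxM: "\<And>X. good X \<Longrightarrow> M \<subseteq> X \<Longrightarrow> X = M" by blast
  have notsmall: "\<not> ( |Wof M| <o |Q| )"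
  proof
    assume sm: "|Wof M| <o |Q|"
    have "|domf M| <o |Q|"
      using gD[OF gM] small_union_finite[OF sm Qinf, of "\<lambda>i. D i \<inter> Q"] finD by auto
    then have "Q - domf M \<noteq> {}"
    proof (intro notI)
      assume "|domf M| <o |Q|" "Q - domf M = {}"
      then have "|Q| <o |Q|" using small_sub[of Q "domf M" Q] by auto
      then show False using ordLess_irreflexive by blast
    qed
    then obtain i0 where i0: "i0 \<in> Q" "i0 \<notin> domf M" by blast
    have fM: "fnl M" using gF[OF gM] .
    define r where "r = (\<Sum>j\<in>D i0 - {i0}. b i0 j * valf M j)"
    define v0 where "v0 = (if r = 0 then (1::int) else 0)"
    define X where "X = M \<union> {(i0, None), (i0, Some v0)} \<union> (\<lambda>j. (j, Some 0)) ` ((D i0 \<inter> Q) - domf M - {i0})"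
    have WX: "Wof X = Wof M \<union> {i0}" by (auto simp: X_def Wof_def)
    have fX: "fnl X"
      unfolding fnl_def
    proof (intro allI impI)
      fix j v v' assume a: "(j, Some v) \<in> X" "(j, Some v') \<in> X"
      have nM: "(j, Some w) \<in> M \<Longrightarrow> j \<in> domf M" for w by (auto simp: domf_def)
      show "v = v'" using a fM i0(2) unfolding X_def fnl_def by (auto simp: domf_def)
    qed
    have dX: "domf X = domf M \<union> (D i0 \<inter> Q)" using iD[OF i0(1)] i0(1) by (auto simp: X_def domf_def)
    have vX_M: "valf X j = valf M j" if jd: "j \<in> domf M" for j
    proof -
      obtain v where v: "(j, Some v) \<in> M" using jd by (auto simp: domf_def)
      then have "(j, Some v) \<in> X" by (simp add: X_def)
      then show ?thesis using valf_eq[OF fX] valf_eq[OF fM v] by metis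
    qed
    have vX_i0: "valf X i0 = v0" by (rule valf_eq[OF fX]) (simp add: X_def)
    have vX_0: "valf X j = valf M j" if "j \<noteq> i0" for j
    proof (cases "j \<in> domf M")
      case True then show ?thesis using vX_M by simp
    next
      case False
      then have vM: "valf M j = 0" by (simp add: valf_out)
      show ?thesis
      proof (cases "j \<in> D i0 \<inter> Q")
        case True
        then have "(j, Some 0) \<in> X" using False that by (auto simp: X_def)
        then show ?thesis using valf_eq[OF fX] vM by metis
      next
        case False
        then have "j \<notin> domf X" using dX \<open>j \<notin> domf M\<close> by auto
        then show ?thesis using vM by (simp add: valf_out)
      qed
    qed
    have gX: "good X"
      unfolding good_def
    proof (intro conjI)
      show "Wof X \<subseteq> Q" using WX gW[OF gM] i0(1) by auto
      show "fnl X" by (rule fX)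
      show "domf X = (\<Union>i\<in>Wof X. D i \<inter> Q)" using dX WX gD[OF gM] by auto
      show "\<forall>i\<in>Wof X. L i (valf X) \<noteq> 0"
      proof
        fix i assume "i \<in> Wof X"
        then consider "i \<in> Wof M" | "i = i0" using WX by auto
        then show "L i (valf X) \<noteq> 0"
        proof cases
          case 1
          have "L i (valf X) = L i (valf M)"
          proof (rule Lcong)
            fix j assume j: "j \<in> D i"
            show "valf X j = valf M j"
            proof (cases "j = i0")
              case False then show ?thesis using vX_0 by simp
            next
              case True
              have "i0 \<in> domf M" using j 1 True i0(1) gD[OF gM] by auto
              then show ?thesis using i0(2) by simp
            qed
          qed
          then show ?thesis using gL[OF gM 1] by simp
        next
          case 2
          have "L i0 (valf X) = b i0 i0 * valf X i0 + (\<Sum>j\<in>D i0 - {i0}. b i0 j * valf X j)"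
            unfolding L_def using sum.remove[OF finD iD[OF i0(1)]] by simp
          also have "(\<Sum>j\<in>D i0 - {i0}. b i0 j * valf X j) = r"
            unfolding r_def by (intro sum.cong) (auto simp: vX_0)
          finally have "L i0 (valf X) = b i0 i0 * v0 + r" using vX_i0 by simp
          then show ?thesis using 2 diag[OF i0(1)] by (simp add: v0_def)
        qed
      qed
    qed
    have "M \<subseteq> X" by (auto simp: X_def)
    then have "X = M" using maxM gX by blast
    moreover have "i0 \<in> Wof X" using WX by simp
    moreover have "i0 \<notin> Wof M" using WD[OF gM] i0(2) by auto
    ultimately show False by simp
  qed
  define c where "c = valf M"
  have "supp c \<subseteq> Q"
    using domQ[OF gM] valf_out[of _ M] by (auto simp: supp_def c_def)
  moreover have "Wof M \<subseteq> {i\<in>Q. (\<Sum>j\<in>{j. b i j \<noteq> 0}. b i j * c j) \<noteq> 0}"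
    using gL[OF gM] gW[OF gM] unfolding L_def D_def c_def by auto
  ultimately show ?thesis using not_small_sub[OF _ notsmall] by blast
qed



definition psi :: "('b \<Rightarrow> ('b \<Rightarrow> int) \<Rightarrow> int) \<Rightarrow> 'b \<Rightarrow> ('b \<Rightarrow> int) \<Rightarrow> int" where
  "psi \<Phi> i x = \<Phi> i x - (\<Sum>j\<in>{j. \<Phi> i (unitv j) \<noteq> 0}. \<Phi> i (unitv j) * x j)"

lemma psi_addh:
  assumes add: "addh (\<Phi> i)" and fin: "finite {j. \<Phi> i (unitv j) \<noteq> 0}"
  shows "addh (psi \<Phi> i)"
  unfolding addh_def psi_def
  using addhD[OF add] by (simp add: sum.distrib algebra_simps)

lemma psi_unit:
  assumes add: "addh (\<Phi> i)" and fin: "finite {j. \<Phi> i (unitv j) \<noteq> 0}"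
  shows "psi \<Phi> i (smul a (unitv j)) = 0"
proof -
  have "(\<Sum>j'\<in>{j. \<Phi> i (unitv j) \<noteq> 0}. \<Phi> i (unitv j') * smul a (unitv j) j')
        = (\<Sum>j'\<in>{j. \<Phi> i (unitv j) \<noteq> 0}. if j' = j then \<Phi> i (unitv j) * a else 0)"
    by (intro sum.cong) (auto simp: smul_def unitv_def)
  also have "\<dots> = \<Phi> i (unitv j) * a" using fin by (simp add: sum.delta)
  finally show ?thesis unfolding psi_def using addh_smul[OF add] by simp
qed

lemma notsmall_iso: "\<not> ( |A| <o |B| ) \<Longrightarrow> |B| =o |C| \<Longrightarrow> \<not> ( |A| <o |C| )"
proof
  assume "\<not> ( |A| <o |B| )" "|B| =o |C|" "|A| <o |C|"
  then have "|A| <o |B|" using ordLess_ordIso_trans[OF _ ordIso_symmetric] by metis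
  then show False using \<open>\<not> ( |A| <o |B| )\<close> by simp
qed

lemma small_iso: "|A| <o |B| \<Longrightarrow> |B| =o |C| \<Longrightarrow> |A| <o |C|"
  by (rule ordLess_ordIso_trans)

lemma GP:
  fixes \<Phi> :: "'b \<Rightarrow> ('b \<Rightarrow> int) \<Rightarrow> int"
  assumes add: "\<And>i. addh (\<Phi> i)" and fin: "\<And>i. finite {j. \<Phi> i (unitv j) \<noteq> 0}"
    and diag: "\<And>i. \<Phi> i (unitv i) \<noteq> 0"
  shows "infinite J \<Longrightarrow> (\<forall>i\<in>J. \<not> DP (psi \<Phi> i) J k) \<Longrightarrow>
         \<exists>c. supp c \<subseteq> J \<and> \<not> ( |{i\<in>J. \<Phi> i c \<noteq> 0}| <o |J| )"
proof (induction k arbitrary: J)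
  case 0
  then have "J \<noteq> {}" by auto
  then obtain i where "i \<in> J" by blast
  then show ?case using 0 DP_0 by blast
next
  case (Suc k)
  note Jinf = Suc.prems(1) and HJ = Suc.prems(2)
  show ?case
  proof (rule ccontr)
    assume "\<not> ?case"
    then have A: "\<And>c. supp c \<subseteq> J \<Longrightarrow> |{i\<in>J. \<Phi> i c \<noteq> 0}| <o |J|" by blast
    have "|J \<times> J| =o |J|" using card_of_Times_same_infinite[OF Jinf] .
    then obtain g where g: "bij_betw g (J \<times> J) J" using card_of_ordIso by blast
    define Q where "Q \<alpha> = g ` ({\<alpha>} \<times> J)" for \<alpha>
    have QJ: "Q \<alpha> \<subseteq> J" if "\<alpha> \<in> J" for \<alpha> using g that unfolding Q_def bij_betw_def by auto
    have Qdis: "Q \<alpha> \<inter> Q \<beta> = {}" if "\<alpha> \<in> J" "\<beta> \<in> J" "\<alpha> \<noteq> \<beta>" for \<alpha> \<beta>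
      using g that unfolding Q_def bij_betw_def inj_on_def by auto
    have Qcard: "|Q \<alpha>| =o |J|" if "\<alpha> \<in> J" for \<alpha>
    proof -
      have "bij_betw g ({\<alpha>} \<times> J) (Q \<alpha>)"
        unfolding Q_def using g that by (auto simp: bij_betw_def inj_on_def)
      then have "|{\<alpha>} \<times> J| =o |Q \<alpha>|" by (rule card_of_ordIsoI)
      moreover have "|{\<alpha>} \<times> J| =o |J|"
        by (rule card_of_ordIsoI[of snd]) (auto simp: bij_betw_def inj_on_def)
      ultimately show ?thesis by (metis ordIso_symmetric ordIso_transitive)
    qed
    have Qinf: "infinite (Q \<alpha>)" if "\<alpha> \<in> J" for \<alpha>
      using card_of_ordIso_finite[OF Qcard[OF that]] Jinf by simp
    have sel: "\<exists>p. supp (fst p) \<subseteq> Q \<alpha> \<and> snd p \<in> Q \<alpha> \<and> \<Phi> (snd p) (fst p) = 0 \<and> psi \<Phi> (snd p) (fst p) \<noteq> 0"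
      if \<alpha>: "\<alpha> \<in> J" for \<alpha>
    proof -
      have diagQ: "\<And>i. i \<in> Q \<alpha> \<Longrightarrow> \<Phi> i (unitv i) \<noteq> 0" using diag by blast
      obtain c where c: "supp c \<subseteq> Q \<alpha>"
        and M: "\<not> ( |{i\<in>Q \<alpha>. (\<Sum>j\<in>{j. \<Phi> i (unitv j) \<noteq> 0}. \<Phi> i (unitv j) * c j) \<noteq> 0}| <o |Q \<alpha>| )"
        using CL[of "\<lambda>i j. \<Phi> i (unitv j)", OF fin diagQ Qinf[OF \<alpha>]] by blast
      let ?M = "{i\<in>Q \<alpha>. (\<Sum>j\<in>{j. \<Phi> i (unitv j) \<noteq> 0}. \<Phi> i (unitv j) * c j) \<noteq> 0}"
      let ?N = "{i\<in>J. \<Phi> i c \<noteq> 0}"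
      have N: "|?N| <o |J|" using A c QJ[OF \<alpha>] by blast
      have "\<not> ?M \<subseteq> ?N"
      proof
        assume "?M \<subseteq> ?N"
        then have "|?M| <o |J|" by (rule small_sub[OF _ N])
        then have "|?M| <o |Q \<alpha>|" by (rule small_iso[OF _ ordIso_symmetric[OF Qcard[OF \<alpha>]]])
        then show False using M by blast
      qed
      then obtain i where i: "i \<in> ?M" "i \<notin> ?N" by blast
      have "i \<in> J" using i(1) QJ[OF \<alpha>] by blast
      then have "\<Phi> i c = 0" using i(2) by blast
      then have "psi \<Phi> i c \<noteq> 0" using i(1) by (simp add: psi_def)
      then show ?thesis using c i(1) \<open>\<Phi> i c = 0\<close> by (intro exI[of _ "(c, i)"]) auto
    qed
    then have "\<forall>\<alpha>\<in>J. \<exists>p. supp (fst p) \<subseteq> Q \<alpha> \<and> snd p \<in> Q \<alpha> \<and> \<Phi> (snd p) (fst p) = 0 \<and> psi \<Phi> (snd p) (fst p) \<noteq> 0"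
      by blast
    from bchoice[OF this] obtain p where p0: "\<forall>\<alpha>\<in>J. supp (fst (p \<alpha>)) \<subseteq> Q \<alpha> \<and> snd (p \<alpha>) \<in> Q \<alpha> \<and>
        \<Phi> (snd (p \<alpha>)) (fst (p \<alpha>)) = 0 \<and> psi \<Phi> (snd (p \<alpha>)) (fst (p \<alpha>)) \<noteq> 0"
      by blast
    have p: "\<And>\<alpha>. \<alpha> \<in> J \<Longrightarrow> supp (fst (p \<alpha>)) \<subseteq> Q \<alpha> \<and> snd (p \<alpha>) \<in> Q \<alpha> \<and>
        \<Phi> (snd (p \<alpha>)) (fst (p \<alpha>)) = 0 \<and> psi \<Phi> (snd (p \<alpha>)) (fst (p \<alpha>)) \<noteq> 0"
      using p0 by blast
    define ii where "ii \<alpha> = snd (p \<alpha>)" for \<alpha>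
    define cc where "cc \<alpha> = fst (p \<alpha>)" for \<alpha>
    define J' where "J' = ii ` J"
    have iiQ: "ii \<alpha> \<in> Q \<alpha>" if "\<alpha> \<in> J" for \<alpha> using p[OF that] by (simp add: ii_def)
    have inj: "inj_on ii J"
    proof (rule inj_onI)
      fix \<alpha> \<beta> assume "\<alpha> \<in> J" "\<beta> \<in> J" "ii \<alpha> = ii \<beta>"
      then show "\<alpha> = \<beta>"
      proof (intro ccontr[of "\<alpha> = \<beta>"])
        assume ab: "\<alpha> \<in> J" "\<beta> \<in> J" "ii \<alpha> = ii \<beta>" "\<alpha> \<noteq> \<beta>"
        have "Q \<alpha> \<inter> Q \<beta> = {}" using Qdis[OF ab(1,2,4)] .
        moreover have "ii \<alpha> \<in> Q \<alpha>" "ii \<alpha> \<in> Q \<beta>" using iiQ[OF ab(1)] iiQ[OF ab(2)] ab(3) by simp_all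
        ultimately show False by blast
      qed
    qed
    have J'J: "J' \<subseteq> J" using iiQ QJ by (auto simp: J'_def)
    have cJ': "|J'| =o |J|"
      using card_of_ordIsoI[of ii J J'] inj by (simp add: J'_def bij_betw_def ordIso_symmetric)
    then have cJ'': "|J| =o |J'|" using ordIso_symmetric by blast
    have J'inf: "infinite J'" using inj Jinf by (simp add: J'_def finite_image_iff)
    have J'Q: "J' \<inter> Q \<alpha> = {ii \<alpha>}" if "\<alpha> \<in> J" for \<alpha>
    proof
      show "J' \<inter> Q \<alpha> \<subseteq> {ii \<alpha>}"
      proof
        fix x assume "x \<in> J' \<inter> Q \<alpha>"
        then obtain \<beta> where "\<beta> \<in> J" "x = ii \<beta>" "x \<in> Q \<alpha>" by (auto simp: J'_def)
        then have "\<beta> = \<alpha>"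
        proof (intro ccontr[of "\<beta> = \<alpha>"])
          assume ab: "\<beta> \<in> J" "x = ii \<beta>" "x \<in> Q \<alpha>" "\<beta> \<noteq> \<alpha>"
          have "Q \<beta> \<inter> Q \<alpha> = {}" using Qdis[OF ab(1) that ab(4)] .
          moreover have "x \<in> Q \<beta>" using iiQ[OF ab(1)] ab(2) by simp
          ultimately show False using ab(3) by blast
        qed
        then show "x \<in> {ii \<alpha>}" using \<open>x = ii \<beta>\<close> by simp
      qed
      show "{ii \<alpha>} \<subseteq> J' \<inter> Q \<alpha>" using iiQ that by (auto simp: J'_def)
    qed
    have HJ': "\<forall>i\<in>J'. \<not> DP (psi \<Phi> i) J' k"
    proof
      fix i assume "i \<in> J'"
      then obtain \<alpha> where \<alpha>: "\<alpha> \<in> J" "i = ii \<alpha>" by (auto simp: J'_def)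
      have addp: "addh (psi \<Phi> i)" by (rule psi_addh[OF add fin])
      let ?P = "Q \<alpha> - {i}"
      have posP: "pos (psi \<Phi> i) ?P"
      proof -
        let ?c = "cc \<alpha>"
        define c' where "c' = (\<lambda>\<xi>. if \<xi> = i then 0 else ?c \<xi>)"
        have "?c = (\<lambda>\<xi>. c' \<xi> + smul (?c i) (unitv i) \<xi>)" by (auto simp: c'_def smul_def unitv_def fun_eq_iff)
        then have "psi \<Phi> i ?c = psi \<Phi> i c' + psi \<Phi> i (smul (?c i) (unitv i))"
          using addhD[OF addp] by metis
        then have "psi \<Phi> i c' = psi \<Phi> i ?c" using psi_unit[OF add fin] by simp
        moreover have "psi \<Phi> i ?c \<noteq> 0" using p[OF \<alpha>(1)] \<alpha>(2) by (simp add: ii_def cc_def)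
        moreover have "supp c' \<subseteq> ?P" using p[OF \<alpha>(1)] by (auto simp: c'_def supp_def cc_def)
        ultimately show ?thesis unfolding pos_def by metis
      qed
      show "\<not> DP (psi \<Phi> i) J' k"
      proof
        assume "DP (psi \<Phi> i) J' k"
        then obtain F where F: "finite F" "k \<le> card F" "\<forall>A\<in>F. A \<subseteq> J' \<and> pos (psi \<Phi> i) A" "pairwise disjnt F"
          unfolding DP_def by blast
        have Pdis: "?P \<inter> A = {}" if "A \<in> F" for A
          using F(3) that J'Q[OF \<alpha>(1)] \<alpha>(2) by blast
        have PnF: "?P \<notin> F"
        proof
          assume "?P \<in> F"
          then have "?P = {}" using Pdis by blast
          then show False using pos_nonempty[OF addp posP] by simp
        qed
        have "DP (psi \<Phi> i) J (Suc k)"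
          unfolding DP_def
        proof (intro exI[of _ "insert ?P F"] conjI)
          show "finite (insert ?P F)" using F(1) by simp
          show "Suc k \<le> card (insert ?P F)" using F(1,2) PnF by simp
          show "\<forall>A\<in>insert ?P F. A \<subseteq> J \<and> pos (psi \<Phi> i) A" using F(3) J'J QJ[OF \<alpha>(1)] posP by blast
          show "pairwise disjnt (insert ?P F)"
            using F(4) Pdis by (auto simp: pairwise_insert disjnt_def)
        qed
        moreover have "i \<in> J" using \<open>i \<in> J'\<close> J'J by blast
        ultimately show False using HJ by blast
      qed
    qed
    obtain c where c: "supp c \<subseteq> J'" "\<not> ( |{i\<in>J'. \<Phi> i c \<noteq> 0}| <o |J'| )"
      using Suc.IH[OF J'inf HJ'] by blast
    have "\<not> ( |{i\<in>J. \<Phi> i c \<noteq> 0}| <o |J'| )"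
      by (rule not_small_sub[OF _ c(2)]) (use J'J in blast)
    then have "\<not> ( |{i\<in>J. \<Phi> i c \<noteq> 0}| <o |J| )" by (rule notsmall_iso[OF _ cJ'])
    moreover have "supp c \<subseteq> J" using c(1) J'J by blast
    ultimately show False using A by blast
  qed
qed



lemma not_le_less: "\<not> ( |A| \<le>o |B| ) \<Longrightarrow> |B| <o |A|"
  using not_ordLeq_iff_ordLess[OF card_of_Well_order card_of_Well_order] by metis

lemma not_less_le: "\<not> ( |A| <o |B| ) \<Longrightarrow> |B| \<le>o |A|"
  using not_ordLess_iff_ordLeq[OF card_of_Well_order card_of_Well_order] by metis

lemma count_union_le:
  assumes "infinite S" "\<And>n::nat. |A n| \<le>o |S|"
  shows "|\<Union>n. A n| \<le>o |S|"
proof -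
  have "|UNIV::nat set| \<le>o |S|" using assms(1) infinite_iff_card_of_nat by metis
  then show ?thesis using card_of_UNION_ordLeq_infinite[OF assms(1), of UNIV A] assms(2) by simp
qed

lemma Un_le: "infinite S \<Longrightarrow> |A| \<le>o |S| \<Longrightarrow> |B| \<le>o |S| \<Longrightarrow> |A \<union> B| \<le>o |S|"
  by (rule Un_Cinfinite_bound) (auto simp: cinfinite_def card_of_Card_order Field_card_of card_of_card_order_on)

lemma countable_le_nat: "countable A \<Longrightarrow> |A| \<le>o |UNIV::nat set|"
  unfolding countable_def using card_of_ordLeq[of A "UNIV::nat set"] by auto

lemma le_nat_countable: "|A| \<le>o |UNIV::nat set| \<Longrightarrow> countable A"
  unfolding countable_def using card_of_ordLeq[of A "UNIV::nat set"] by auto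

lemma countable_small: "countable A \<Longrightarrow> \<not> countable U \<Longrightarrow> |A| <o |U|"
proof -
  assume a: "countable A" "\<not> countable U"
  have "\<not> ( |U| \<le>o |UNIV::nat set| )" using a(2) le_nat_countable by blast
  then have "|UNIV::nat set| <o |U|" by (rule not_le_less)
  then show ?thesis using countable_le_nat[OF a(1)] by (rule ordLeq_ordLess_trans[rotated])
qed

lemma small_Un: "infinite U \<Longrightarrow> |A| <o |U| \<Longrightarrow> |B| <o |U| \<Longrightarrow> |A \<union> B| <o |U|"
  by (rule card_of_Un_ordLess_infinite)



definition specB :: "('b \<Rightarrow> ('b \<Rightarrow> int) \<Rightarrow> int) \<Rightarrow> 'b set \<Rightarrow> 'b set \<Rightarrow> 'b set \<Rightarrow> ('b \<Rightarrow> int) \<Rightarrow> 'b set \<Rightarrow> nat \<Rightarrow> bool" where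
  "specB \<Phi> In X J c A b \<longleftrightarrow> J \<inter> X = {} \<and> supp c \<subseteq> J \<and> |J| <o |UNIV::'b set| \<and> A \<subseteq> J \<and>
     (\<forall>i\<in>A. \<Phi> i c \<noteq> 0 \<and> \<bar>\<Phi> i c\<bar> \<le> int b) \<and> |In| \<le>o |A| \<and> infinite A"

lemma caseB_step:
  fixes \<Phi> :: "'b \<Rightarrow> ('b \<Rightarrow> int) \<Rightarrow> int" and I :: "nat \<Rightarrow> 'b set"
  assumes add: "\<And>i. addh (\<Phi> i)" and fin: "\<And>i. finite {j. \<Phi> i (unitv j) \<noteq> 0}"
    and diag: "\<And>i. \<Phi> i (unitv i) \<noteq> 0"
    and U: "\<not> countable (UNIV::'b set)"
    and Icov: "(\<Union>k. I k) = UNIV"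
    and Ismall: "\<And>k. |I k| <o |UNIV::'b set|"
    and Irank: "\<And>k i. i \<in> I k \<Longrightarrow> \<not> DP (psi \<Phi> i) UNIV k"
    and X: "|X| <o |UNIV::'b set|"
  shows "\<exists>J c A b. specB \<Phi> (I n) X J c A b"
proof -
  have Uinf: "infinite (UNIV::'b set)" using U countable_finite by blast
  obtain g :: "nat \<Rightarrow> 'b" where g: "inj g" using infinite_countable_subset[OF Uinf] by blast
  define R where "R = range g"
  have Rinf: "infinite R" using g by (simp add: R_def finite_image_iff)
  have Rs: "|R| <o |UNIV::'b set|" by (rule countable_small[OF _ U]) (simp add: R_def)
  define S where "S = X \<union> I n \<union> R"
  have Ss: "|S| <o |UNIV::'b set|" unfolding S_def by (intro small_Un[OF Uinf] X Ismall Rs)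
  have Sinf: "infinite S" using Rinf by (simp add: S_def)
  have "\<exists>k. \<not> ( |I k| \<le>o |S| )"
  proof (rule ccontr)
    assume "\<not> ?thesis"
    then have "\<And>k. |I k| \<le>o |S|" by blast
    then have "|\<Union>k. I k| \<le>o |S|" by (rule count_union_le[OF Sinf])
    then have "|UNIV::'b set| \<le>o |S|" using Icov by simp
    then have "|UNIV::'b set| <o |UNIV::'b set|" using Ss by (rule ordLeq_ordLess_trans)
    then show False using ordLess_irreflexive by blast
  qed
  then obtain k where k: "\<not> ( |I k| \<le>o |S| )" by blast
  define J where "J = I k - X"
  have XS: "|X| \<le>o |S|" by (rule card_of_mono1) (auto simp: S_def)
  have Jbig: "\<not> ( |J| \<le>o |S| )"
  proof
    assume "|J| \<le>o |S|"
    then have "|J \<union> X| \<le>o |S|" using Un_le[OF Sinf _ XS] by blast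
    moreover have "|I k| \<le>o |J \<union> X|" by (rule card_of_mono1) (auto simp: J_def)
    ultimately have "|I k| \<le>o |S|" by (metis ordLeq_transitive)
    then show False using k by simp
  qed
  have SJ: "|S| <o |J|" by (rule not_le_less[OF Jbig])
  have Jinf: "infinite J"
  proof
    assume "finite J"
    then have "|J| <o |S|" using Sinf by (rule finite_ordLess_infinite)
    then show False using Jbig ordLess_imp_ordLeq by auto
  qed
  have Jr: "\<forall>i\<in>J. \<not> DP (psi \<Phi> i) J k"
    using Irank DP_mono_S[of J UNIV] by (auto simp: J_def)
  obtain c where c: "supp c \<subseteq> J" "\<not> ( |{i\<in>J. \<Phi> i c \<noteq> 0}| <o |J| )"
    using GP[OF add fin diag Jinf Jr] by blast
  let ?N = "{i\<in>J. \<Phi> i c \<noteq> 0}"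
  define Ab where "Ab b = {i\<in>?N. \<bar>\<Phi> i c\<bar> \<le> int b}" for b :: nat
  have "\<exists>b. \<not> ( |Ab b| \<le>o |S| )"
  proof (rule ccontr)
    assume "\<not> ?thesis"
    then have "\<And>b. |Ab b| \<le>o |S|" by blast
    then have "|\<Union>b. Ab b| \<le>o |S|" by (rule count_union_le[OF Sinf])
    moreover have "(\<Union>b. Ab b) = ?N"
    proof
      show "(\<Union>b. Ab b) \<subseteq> ?N" by (auto simp: Ab_def)
      show "?N \<subseteq> (\<Union>b. Ab b)"
      proof
        fix i assume "i \<in> ?N"
        then have "i \<in> Ab (nat \<bar>\<Phi> i c\<bar>)" by (simp add: Ab_def)
        then show "i \<in> (\<Union>b. Ab b)" by blast
      qed
    qed
    ultimately have "|?N| \<le>o |S|" by simp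
    then have "|?N| <o |J|" using SJ by (rule ordLeq_ordLess_trans)
    then show False using c(2) by blast
  qed
  then obtain b where b: "\<not> ( |Ab b| \<le>o |S| )" by blast
  have SA: "|S| <o |Ab b|" by (rule not_le_less[OF b])
  have InS: "|I n| \<le>o |S|" by (rule card_of_mono1) (auto simp: S_def)
  have InA: "|I n| \<le>o |Ab b|" using ordLeq_transitive[OF InS ordLess_imp_ordLeq[OF SA]] .
  have Ainf: "infinite (Ab b)"
  proof
    assume "finite (Ab b)"
    then have "|Ab b| <o |S|" using Sinf by (rule finite_ordLess_infinite)
    then show False using b ordLess_imp_ordLeq by auto
  qed
  have Js: "|J| <o |UNIV::'b set|" by (rule small_sub[OF _ Ismall[of k]]) (auto simp: J_def)
  have "specB \<Phi> (I n) X J c (Ab b) b"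
    unfolding specB_def using c(1) Js InA Ainf by (auto simp: J_def Ab_def)
  then show ?thesis by blast
qed



lemma caseB:
  fixes \<Phi> :: "'b \<Rightarrow> ('b \<Rightarrow> int) \<Rightarrow> int" and I :: "nat \<Rightarrow> 'b set"
  assumes add: "\<And>i. addh (\<Phi> i)" and fin: "\<And>i. finite {j. \<Phi> i (unitv j) \<noteq> 0}"
    and diag: "\<And>i. \<Phi> i (unitv i) \<noteq> 0"
    and U: "\<not> countable (UNIV::'b set)"
    and H': "\<And>c. |{i. \<Phi> i c \<noteq> 0}| <o |UNIV::'b set|"
    and Icov: "(\<Union>k. I k) = UNIV"
    and Ismall: "\<And>k. |I k| <o |UNIV::'b set|"
    and Irank: "\<And>k i. i \<in> I k \<Longrightarrow> \<not> DP (psi \<Phi> i) UNIV k"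
  shows False
proof -
  have Uinf: "infinite (UNIV::'b set)" using U countable_finite by blast
  define stp where "stp n X = (SOME t. specB \<Phi> (I n) X (fst t) (fst (snd t)) (fst (snd (snd t))) (snd (snd (snd t))))"
    for n and X :: "'b set"
  have stp_spec: "specB \<Phi> (I n) X (fst (stp n X)) (fst (snd (stp n X))) (fst (snd (snd (stp n X)))) (snd (snd (snd (stp n X))))"
    if Xsm: "|X| <o |UNIV::'b set|" for n X
  proof -
    obtain J c A b where "specB \<Phi> (I n) X J c A b"
      using caseB_step[OF add fin diag U Icov Ismall Irank Xsm] by blast
    then have "\<exists>t. specB \<Phi> (I n) X (fst t) (fst (snd t)) (fst (snd (snd t))) (snd (snd (snd t)))"
      by (intro exI[of _ "(J, c, A, b)"]) simp
    then show ?thesis unfolding stp_def by (rule someI_ex)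
  qed
  define Xs where "Xs = rec_nat {} (\<lambda>n X. X \<union> fst (stp n X) \<union> {i. \<Phi> i (fst (snd (stp n X))) \<noteq> 0})"
  have Xs0: "Xs 0 = {}" and XsS: "Xs (Suc n) = Xs n \<union> fst (stp n (Xs n)) \<union> {i. \<Phi> i (fst (snd (stp n (Xs n)))) \<noteq> 0}" for n
    by (simp_all add: Xs_def)
  define Jn where "Jn n = fst (stp n (Xs n))" for n
  define cn where "cn n = fst (snd (stp n (Xs n)))" for n
  define An where "An n = fst (snd (snd (stp n (Xs n))))" for n
  define bn where "bn n = snd (snd (snd (stp n (Xs n))))" for n
  have XsS': "Xs (Suc n) = Xs n \<union> Jn n \<union> {i. \<Phi> i (cn n) \<noteq> 0}" for n
    by (simp add: XsS Jn_def cn_def)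
  have small_and_spec: "|Xs n| <o |UNIV::'b set| \<and> specB \<Phi> (I n) (Xs n) (Jn n) (cn n) (An n) (bn n)" for n
  proof (induction n)
    case 0
    have "|Xs 0| <o |UNIV::'b set|" using Uinf by (simp add: Xs0 finite_ordLess_infinite)
    then show ?case using stp_spec by (simp add: Jn_def cn_def An_def bn_def)
  next
    case (Suc n)
    have sp: "specB \<Phi> (I n) (Xs n) (Jn n) (cn n) (An n) (bn n)" using Suc by simp
    have "|Jn n| <o |UNIV::'b set|" using sp by (simp add: specB_def)
    then have "|Xs (Suc n)| <o |UNIV::'b set|"
      unfolding XsS' by (intro small_Un[OF Uinf] H') (use Suc in simp_all)
    then show ?case using stp_spec by (simp add: Jn_def cn_def An_def bn_def)
  qed
  have sp: "specB \<Phi> (I n) (Xs n) (Jn n) (cn n) (An n) (bn n)" for n using small_and_spec by blast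
  have Xmono: "Xs m \<subseteq> Xs (m + d)" for m d by (induction d) (auto simp: XsS')
  have JX: "Jn n \<inter> Xs n = {}" and cJ: "supp (cn n) \<subseteq> Jn n" and AJ: "An n \<subseteq> Jn n"
    and Aval: "\<And>i. i \<in> An n \<Longrightarrow> \<Phi> i (cn n) \<noteq> 0 \<and> \<bar>\<Phi> i (cn n)\<bar> \<le> int (bn n)"
    and IA: "|I n| \<le>o |An n|" and Ainf: "infinite (An n)" for n
    using sp[of n] unfolding specB_def by auto
  have earlier: "Jn m \<union> {i. \<Phi> i (cn m) \<noteq> 0} \<subseteq> Xs n" if "m < n" for m n
  proof -
    have "Xs (Suc m) \<subseteq> Xs n" using Xmono[of "Suc m" "n - Suc m"] that by simp
    then show ?thesis by (auto simp: XsS')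
  qed
  have dj: "djs cn"
    unfolding djs_def
  proof (intro allI impI)
    fix m n \<xi> assume mn: "m \<noteq> n" and cm: "cn m \<xi> \<noteq> 0"
    show "cn n \<xi> = 0"
    proof (rule ccontr)
      assume cn0: "cn n \<xi> \<noteq> 0"
      have a: "\<xi> \<in> Jn m" "\<xi> \<in> Jn n" using cJ[of m] cJ[of n] cm cn0 by (auto simp: supp_def)
      show False
      proof (cases "m < n")
        case True
        then show ?thesis using earlier[OF True] JX[of n] a by blast
      next
        case False
        then have "n < m" using mn by simp
        then show ?thesis using earlier[of n m] JX[of m] a by blast
      qed
    qed
  qed
  define Mm where "Mm = rec_nat (1::int) (\<lambda>n m. m * (int (bn n) + 1))"
  have Mm0: "Mm 0 = 1" and MmS: "Mm (Suc n) = Mm n * (int (bn n) + 1)" for n by (simp_all add: Mm_def)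
  have Mpos: "Mm n \<ge> 1" for n
  proof (induction n)
    case 0 then show ?case by (simp add: Mm0)
  next
    case (Suc n)
    have "Mm n * (int (bn n) + 1) \<ge> 1 * 1" by (rule mult_mono) (use Suc in auto)
    then show ?case by (simp add: MmS)
  qed
  have Mdv: "Mm m dvd Mm k" if "m \<le> k" for m k
    using that
  proof (induction k)
    case 0 then show ?case by simp
  next
    case (Suc k)
    then show ?case by (metis MmS dvd_mult2 dvd_refl le_Suc_eq)
  qed
  define x where "x = ser cn Mm"
  have xnz: "\<Phi> i x \<noteq> 0" if iA: "i \<in> An n" for i n
  proof
    assume x0: "\<Phi> i x = 0"
    have "\<Phi> i x = (\<Sum>m<Suc n. Mm m * \<Phi> i (cn m)) + Mm (Suc n) * \<Phi> i (sertl cn Mm (Suc n))"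
      unfolding x_def by (rule addh_ser[OF add dj]) (rule Mdv)
    moreover have "(\<Sum>m<Suc n. Mm m * \<Phi> i (cn m)) = Mm n * \<Phi> i (cn n)"
    proof -
      have "\<Phi> i (cn m) = 0" if "m < n" for m
      proof -
        have "i \<in> Jn n" using AJ iA by blast
        then have "i \<notin> Xs n" using JX by blast
        then show ?thesis using earlier[OF that] by blast
      qed
      then have "(\<Sum>m<n. Mm m * \<Phi> i (cn m)) = 0" by simp
      then show ?thesis by simp
    qed
    ultimately have "Mm n * \<Phi> i (cn n) + Mm n * ((int (bn n) + 1) * \<Phi> i (sertl cn Mm (Suc n))) = 0"
      using x0 by (simp add: MmS mult.assoc)
    then have "Mm n * (\<Phi> i (cn n) + (int (bn n) + 1) * \<Phi> i (sertl cn Mm (Suc n))) = 0"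
      by (simp add: distrib_left)
    then have eq: "\<Phi> i (cn n) = - ((int (bn n) + 1) * \<Phi> i (sertl cn Mm (Suc n)))"
      using Mpos[of n] by simp
    let ?w = "\<Phi> i (sertl cn Mm (Suc n))"
    have av: "\<Phi> i (cn n) \<noteq> 0" "\<bar>\<Phi> i (cn n)\<bar> \<le> int (bn n)" using Aval[OF iA] by auto
    show False
    proof (cases "?w = 0")
      case True then show ?thesis using eq av by simp
    next
      case False
      then have "\<bar>?w\<bar> \<ge> 1" by linarith
      then have "(int (bn n) + 1) * \<bar>?w\<bar> \<ge> (int (bn n) + 1) * 1" by (intro mult_left_mono) auto
      moreover have "\<bar>\<Phi> i (cn n)\<bar> = (int (bn n) + 1) * \<bar>?w\<bar>" using eq by (simp add: abs_mult)
      ultimately have "\<bar>\<Phi> i (cn n)\<bar> \<ge> int (bn n) + 1" by simp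
      then show False using av by linarith
    qed
  qed
  define Z where "Z = {i. \<Phi> i x \<noteq> 0}"
  have AZ: "An n \<subseteq> Z" for n using xnz by (auto simp: Z_def)
  have Zs: "|Z| <o |UNIV::'b set|" unfolding Z_def by (rule H')
  have Zinf: "infinite Z" using Ainf[of 0] AZ[of 0] finite_subset by blast
  have "|I n| \<le>o |Z|" for n using ordLeq_transitive[OF IA[of n] card_of_mono1[OF AZ[of n]]] .
  then have "|\<Union>n. I n| \<le>o |Z|" by (rule count_union_le[OF Zinf])
  then have "|UNIV::'b set| \<le>o |Z|" using Icov by simp
  then have "|UNIV::'b set| <o |UNIV::'b set|" using Zs by (rule ordLeq_ordLess_trans)
  then show False using ordLess_irreflexive by blast
qed



lemma main_core:
  fixes f :: "('b \<Rightarrow> int) \<Rightarrow> ('l \<Rightarrow> int)"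
  assumes binf: "infinite (UNIV::'b set)" and inj: "inj f"
    and addf: "\<forall>x y. f (\<lambda>\<xi>. x \<xi> + y \<xi>) = (\<lambda>\<eta>. f x \<eta> + f y \<eta>)"
    and sm: "\<And>x. |supp (f x)| <o |UNIV::'b set|"
  shows False
proof -
  have addphi: "addh (\<lambda>x. f x \<eta>)" for \<eta>
    unfolding addh_def using addf by simp
  have f0: "f (\<lambda>_. 0) = (\<lambda>_. 0)"
  proof -
    have "f (\<lambda>_. 0) = (\<lambda>\<eta>. f (\<lambda>_. 0) \<eta> + f (\<lambda>_. 0) \<eta>)"
      using spec[OF spec[OF addf, of "\<lambda>_. 0"], of "\<lambda>_. 0"] by simp
    then show ?thesis by (metis add_cancel_right_right)
  qed
  have unz: "\<exists>\<eta>. f (unitv j) \<eta> \<noteq> 0" for j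
  proof (rule ccontr)
    assume "\<not> ?thesis"
    then have "f (unitv j) = f (\<lambda>_. 0)" using f0 by auto
    then have "unitv j = (\<lambda>_. 0)" using inj by (simp add: inj_def)
    then show False by (metis unitv_def zero_neq_one)
  qed
  define \<eta> where "\<eta> j = (SOME e. f (unitv j) e \<noteq> 0)" for j
  have \<eta>: "f (unitv j) (\<eta> j) \<noteq> 0" for j unfolding \<eta>_def using unz[of j] by (rule someI_ex)
  have finD: "finite {j. f (unitv j) e \<noteq> 0}" for e
  proof (rule ccontr)
    assume inf: "infinite {j. f (unitv j) e \<noteq> 0}"
    obtain s :: "nat \<Rightarrow> 'b" where s: "inj s" "range s \<subseteq> {j. f (unitv j) e \<noteq> 0}"
      using infinite_countable_subset[OF inf] by blast
    define y where "y n = unitv (s n)" for n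
    have dj: "djs y" unfolding djs_def y_def unitv_def using s(1) by (auto simp: inj_def)
    have "finite {n. f (y n) e \<noteq> 0}" using specker[OF addphi dj] .
    moreover have "{n. f (y n) e \<noteq> 0} = UNIV" using s(2) by (auto simp: y_def)
    ultimately show False by simp
  qed
  define \<Phi> where "\<Phi> i x = f x (\<eta> i)" for i x
  have add: "\<And>i. addh (\<Phi> i)" unfolding \<Phi>_def using addphi by simp
  have fin: "\<And>i. finite {j. \<Phi> i (unitv j) \<noteq> 0}" unfolding \<Phi>_def using finD by simp
  have diag: "\<And>i. \<Phi> i (unitv i) \<noteq> 0" unfolding \<Phi>_def using \<eta> by simp
  have H': "|{i. \<Phi> i c \<noteq> 0}| <o |UNIV::'b set|" for c
  proof -
    have "{i. \<Phi> i c \<noteq> 0} \<subseteq> (\<Union>e\<in>supp (f c). {j. f (unitv j) e \<noteq> 0})"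
      using \<eta> by (auto simp: \<Phi>_def supp_def)
    moreover have "|\<Union>e\<in>supp (f c). {j. f (unitv j) e \<noteq> 0}| <o |UNIV::'b set|"
      by (rule small_union_finite[OF sm binf finD])
    ultimately show ?thesis by (rule small_sub)
  qed
  define I where "I k = {i. \<not> DP (psi \<Phi> i) UNIV k}" for k
  have addp: "addh (psi \<Phi> i)" for i by (rule psi_addh[OF add fin])
  have Icov: "(\<Union>k. I k) = UNIV"
    using finite_rank[OF addp] by (auto simp: I_def)
  have Irank: "\<And>k i. i \<in> I k \<Longrightarrow> \<not> DP (psi \<Phi> i) UNIV k" by (simp add: I_def)
  show False
  proof (cases "\<exists>k. \<not> ( |I k| <o |UNIV::'b set| )")
    case True
    then obtain k where k: "\<not> ( |I k| <o |UNIV::'b set| )" by blast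
    have kinf: "infinite (I k)"
    proof
      assume "finite (I k)"
      then have "|I k| <o |UNIV::'b set|" using binf by (rule finite_ordLess_infinite)
      then show False using k by simp
    qed
    have Jr: "\<forall>i\<in>I k. \<not> DP (psi \<Phi> i) (I k) k"
      using Irank DP_mono_S[of "I k" UNIV] by blast
    obtain c where c: "supp c \<subseteq> I k" "\<not> ( |{i\<in>I k. \<Phi> i c \<noteq> 0}| <o |I k| )"
      using GP[OF add fin diag kinf Jr] by blast
    have "|{i\<in>I k. \<Phi> i c \<noteq> 0}| <o |UNIV::'b set|" by (rule small_sub[OF _ H'[of c]]) blast
    then have "|{i\<in>I k. \<Phi> i c \<noteq> 0}| <o |I k|" using not_less_le[OF k] by (rule ordLess_ordLeq_trans)
    then show False using c(2) by simp
  next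
    case False
    then have Ismall: "\<And>k. |I k| <o |UNIV::'b set|" by blast
    show False
    proof (cases "countable (UNIV::'b set)")
      case True
      have e0: "\<And>j. psi \<Phi> i (unitv j) = 0" for i
      proof -
        fix j
        have "psi \<Phi> i (smul 1 (unitv j)) = 0" by (rule psi_unit[OF add fin])
        moreover have "smul 1 (unitv j) = unitv j" by (simp add: smul_def)
        ultimately show "psi \<Phi> i (unitv j) = 0" by simp
      qed
      have nopos: "\<not> pos (psi \<Phi> i) A" for i A
        unfolding pos_def using countable_null[OF addp e0 True] by blast
      have "\<not> DP (psi \<Phi> i) UNIV 1" for i
      proof
        assume "DP (psi \<Phi> i) UNIV 1"
        then obtain F where F: "finite F" "1 \<le> card F" "\<forall>A\<in>F. A \<subseteq> UNIV \<and> pos (psi \<Phi> i) A"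
          unfolding DP_def by blast
        then have "F \<noteq> {}" by auto
        then show False using F(3) nopos by blast
      qed
      then have "I 1 = UNIV" by (auto simp: I_def)
      then have "|UNIV::'b set| <o |UNIV::'b set|" using Ismall[of 1] by simp
      then show False using ordLess_irreflexive by blast
    next
      case False
      show False by (rule caseB[OF add fin diag False H' Icov Ismall Irank])
    qed
  qed
qed

end

theorem mainTheorem8:
  assumes "infinite (UNIV :: 'b set)"
    and "infinite (UNIV :: 'l set)"
    and "(card_of (UNIV :: 'b set), cardSuc (card_of (UNIV :: 'l set))) \<in> ordLeq"
  shows "\<not> (\<exists>f :: ('b \<Rightarrow> int) \<Rightarrow> ('l \<Rightarrow> int).
            inj f
          \<and> (\<forall>x y. f (\<lambda>\<xi>. x \<xi> + y \<xi>) = (\<lambda>\<eta>. f x \<eta> + f y \<eta>))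
          \<and> range f \<subseteq> Pset TYPE('b))"
proof
  assume "\<exists>f :: ('b \<Rightarrow> int) \<Rightarrow> ('l \<Rightarrow> int).
            inj f
          \<and> (\<forall>x y. f (\<lambda>\<xi>. x \<xi> + y \<xi>) = (\<lambda>\<eta>. f x \<eta> + f y \<eta>))
          \<and> range f \<subseteq> Pset TYPE('b)"
  then obtain f :: "('b \<Rightarrow> int) \<Rightarrow> ('l \<Rightarrow> int)" where f: "inj f"
    "\<forall>x y. f (\<lambda>\<xi>. x \<xi> + y \<xi>) = (\<lambda>\<eta>. f x \<eta> + f y \<eta>)" "range f \<subseteq> Pset TYPE('b)"
    by blast
  have sm: "(card_of (supp (f x)), card_of (UNIV :: 'b set)) \<in> ordLess" for x
    using f(3) unfolding Pset_def by blast
  show False by (rule main_core[OF assms(1) f(1) f(2) sm])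
qed

end
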